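(* Let $K$ be a field, $A=K[x_1,\dots,x_n]$, and $P=(x_1^{e_1},\dots,x_r^{e_r})$ for some $r\le n$ and integers $2\le e_1\le\cdots\le e_r$. Let $J\subset A$ be a strongly stable ideal and $I\subset A$ a monomial ideal containing $P+J$. Fix variables $a=x_i$, $b=x_j$ with $i<j$ and an integer $t>0$. Then $J\subset \mathrm{Shift}_{a,b,t}(I)$.
   Context: A monomial ideal $J$ is strongly stable if whenever $x_k m\in J$ for a monomial $m$, then $x_l m\in J$ for all $l<k$. For a monomial ideal $I$, variables $a=x_i,b=x_j$ with $i<j$, and $t\in\mathbb{Z}_{\ge0}$, $\mathrm{Shift}_{a,b,t}(I)$ is the $K$-vector space spanned by the following monomials, where $f$ ranges over monomials divisible by neither $a$ nor $b$ and $s,l$ range over integers with $0\le s<l$: (1) $fa^sb^r$ whenever $fa^sb^r\in I$ and $r<t$; (2) $fa^sb^{s+t}$ whenever $fa^sb^{s+t}\in I$; (3) $fa^lb^{s+t}$ whenever $fa^lb^{s+t}\in I$ or $fa^sb^{l+t}\in I$; (4) $fa^sb^{l+t}$ whenever both $fa^lb^{s+t}\in I$ and $fa^sb^{l+t}\in I$. *)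

theory Defs
  imports Main "HOL-Library.Function_Algebras"
begin

text \<open>Monomials of A = K[x_0,...,x_(n-1)] are exponent vectors nat => nat vanishing
  outside {0..<n}; the product of monomials is pointwise addition. A monomial ideal is
  identified with the set of monomials it contains (it is the K-span of them); the field K
  plays no role in the statement.\<close>

definition monomial :: "nat \<Rightarrow> (nat \<Rightarrow> nat) \<Rightarrow> bool" where
  "monomial n m \<longleftrightarrow> (\<forall>k\<ge>n. m k = 0)"

definition xpow :: "nat \<Rightarrow> nat \<Rightarrow> (nat \<Rightarrow> nat)" where
  "xpow k e = (\<lambda>v. if v = k then e else 0)"

definition monomial_ideal :: "nat \<Rightarrow> (nat \<Rightarrow> nat) set \<Rightarrow> bool" where
  "monomial_ideal n I \<longleftrightarrow> (\<forall>m\<in>I. monomial n m) \<and>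
     (\<forall>m\<in>I. \<forall>g. monomial n g \<longrightarrow> m + g \<in> I)"

definition strongly_stable :: "nat \<Rightarrow> (nat \<Rightarrow> nat) set \<Rightarrow> bool" where
  "strongly_stable n J \<longleftrightarrow> monomial_ideal n J \<and>
     (\<forall>m k l. monomial n m \<longrightarrow> k < n \<longrightarrow> l < k \<longrightarrow> m + xpow k 1 \<in> J \<longrightarrow> m + xpow l 1 \<in> J)"

definition pure_powers_ideal :: "nat \<Rightarrow> nat \<Rightarrow> (nat \<Rightarrow> nat) \<Rightarrow> (nat \<Rightarrow> nat) set" where
  "pure_powers_ideal n r e = {m. monomial n m \<and> (\<exists>k<r. e k \<le> m k)}"

text \<open>The monomials spanning Shift_{a,b,t}(I), with a = x_i, b = x_j.\<close>
definition shift :: "nat \<Rightarrow> (nat \<Rightarrow> nat) set \<Rightarrow> nat \<Rightarrow> nat \<Rightarrow> nat \<Rightarrow> (nat \<Rightarrow> nat) set" where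
  "shift n I i j t =
     {u. \<exists>f s r. monomial n f \<and> f i = 0 \<and> f j = 0 \<and>
          u = f + xpow i s + xpow j r \<and> u \<in> I \<and> r < t}
   \<union> {u. \<exists>f s. monomial n f \<and> f i = 0 \<and> f j = 0 \<and>
          u = f + xpow i s + xpow j (s + t) \<and> u \<in> I}
   \<union> {u. \<exists>f s l. monomial n f \<and> f i = 0 \<and> f j = 0 \<and> s < l \<and>
          u = f + xpow i l + xpow j (s + t) \<and>
          (f + xpow i l + xpow j (s + t) \<in> I \<or> f + xpow i s + xpow j (l + t) \<in> I)}
   \<union> {u. \<exists>f s l. monomial n f \<and> f i = 0 \<and> f j = 0 \<and> s < l \<and>
          u = f + xpow i s + xpow j (l + t) \<and>
          f + xpow i l + xpow j (s + t) \<in> I \<and> f + xpow i s + xpow j (l + t) \<in> I}"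

end

theory Submission
  imports Defs
begin

lemma mono_xpow: "k < n \<Longrightarrow> monomial n (xpow k e)"
  by (auto simp: monomial_def xpow_def)

lemma mono_add: "monomial n f \<Longrightarrow> monomial n g \<Longrightarrow> monomial n (f + g)"
  by (auto simp: monomial_def)

lemma move:
  assumes ss: "strongly_stable n J" and ij: "i < j" "j < n" and f: "monomial n f"
  shows "f + xpow i p + xpow j (q + k) \<in> J \<Longrightarrow> f + xpow i (p + k) + xpow j q \<in> J"
proof (induction k arbitrary: p)
  case 0 then show ?case by simp
next
  case (Suc k)
  let ?m = "f + xpow i p + xpow j (q + k)"
  have mm: "monomial n ?m" using ij f by (intro mono_add mono_xpow) auto
  have eq: "?m + xpow j 1 = f + xpow i p + xpow j (q + Suc k)"
    by (auto simp: fun_eq_iff xpow_def)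
  have "?m + xpow j 1 \<in> J" by (subst eq) (rule Suc.prems)
  with ss mm ij have "?m + xpow i 1 \<in> J" unfolding strongly_stable_def by blast
  moreover have "?m + xpow i 1 = f + xpow i (Suc p) + xpow j (q + k)"
    using ij by (auto simp: fun_eq_iff xpow_def)
  ultimately have "f + xpow i (Suc p) + xpow j (q + k) \<in> J" by metis
  from Suc.IH[of "Suc p", OF this] have "f + xpow i (Suc p + k) + xpow j q \<in> J" .
  moreover have "Suc p + k = p + Suc k" by simp
  ultimately show ?case by metis
qed

theorem mainTheorem3:
  fixes n r :: nat and e :: "nat \<Rightarrow> nat" and I J :: "(nat \<Rightarrow> nat) set"
    and i j t :: nat
  assumes "r \<le> n"
    and "\<forall>k<r. 2 \<le> e k"
    and "\<forall>k l. k \<le> l \<longrightarrow> l < r \<longrightarrow> e k \<le> e l"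
    and "strongly_stable n J"
    and "monomial_ideal n I"
    and "pure_powers_ideal n r e \<subseteq> I"
    and "J \<subseteq> I"
    and "i < j" and "j < n"
    and "0 < t"
  shows "J \<subseteq> shift n I i j t"
proof
  fix u assume uJ: "u \<in> J"
  have uI: "u \<in> I" using uJ assms(7) by blast
  have um: "monomial n u" using uJ assms(4) unfolding strongly_stable_def monomial_ideal_def by blast
  define f where "f = u(i := 0, j := 0)"
  define p where "p = u i"
  define q where "q = u j"
  have fm: "monomial n f" using um by (auto simp: f_def monomial_def)
  have fi: "f i = 0" "f j = 0" by (auto simp: f_def)
  have ueq: "u = f + xpow i p + xpow j q"
    using assms(8) by (auto simp: fun_eq_iff f_def p_def q_def xpow_def)
  consider "q < t" | "q = p + t" | "q > p + t" | "t \<le> q \<and> q < p + t" by linarith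
  then show "u \<in> shift n I i j t"
  proof cases
    case 1 note c=this show ?thesis unfolding shift_def
      apply (rule UnI1, rule UnI1, rule UnI1) by (intro CollectI exI[of _ f] exI[of _ p] exI[of _ q]) (use fm fi ueq uI c in auto)
  next
    case 2 note c=this show ?thesis unfolding shift_def
      apply (rule UnI1, rule UnI1, rule UnI2) by (intro CollectI exI[of _ f] exI[of _ p]) (use fm fi ueq uI c in auto)
  next
    case 3
    define l where "l = q - t"
    have lp: "p < l" and ql: "q = l + t" using 3 by (auto simp: l_def)
    have eqn: "(p + t) + (l - p) = q" using ql lp by simp
    have "f + xpow i p + xpow j ((p + t) + (l - p)) \<in> J" using uJ unfolding eqn ueq[symmetric] .
    from move[OF assms(4) assms(8) assms(9) fm this]
    have "f + xpow i l + xpow j (p + t) \<in> I" using lp assms(7) by auto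
    note ll = this
    show ?thesis unfolding shift_def
      apply (rule UnI2) by (intro CollectI exI[of _ f] exI[of _ p] exI[of _ l]) (use fm fi ueq uI ql lp ll in auto)
  next
    case 4
    define s where "s = q - t"
    have sp: "s < p" and qs: "q = s + t" using 4 by (auto simp: s_def)
    show ?thesis unfolding shift_def
      apply (rule UnI1, rule UnI2) by (intro CollectI exI[of _ f] exI[of _ s] exI[of _ p]) (use fm fi ueq uI qs sp in auto)
  qed
qed

end
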